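(* In the multiple-choice secretary problem with predictions with capacity $k$, run the Learned Kleinberg algorithm with any threshold $\theta\ge0$, and assume $1\le |M|\le\sqrt{k}\ln k$. Let $t_M=\min_{i\in M}t_i$ be the first arrival time of a candidate in $M$, let $S=\{i\in\hat S: t_i<t_M\}$ be the set of candidates hired before time $t_M$, and define $k'=k-|S|-1$. Then $\Pr(k'\ge\sqrt{k}\ln k)\ge 1-\frac{3\ln k}{\sqrt{k}}$.
   Context: Multiple-choice secretary problem with predictions (continuous-time model): there are $n$ candidates $N=\{1,\dots,n\}$, each with actual value $v(i)>0$ and predicted value $\hat v(i)\ge 0$ (known in advance), and a capacity $k$ (positive integer). Each candidate $i$ independently receives an arrival time $t_i$ uniform on $[0,1]$. For $S\subseteq N$, $\hat v(S)=\sum_{i\in S}\hat v(i)$. $M=\{i\in N : |1-\hat v(i)/v(i)|>\theta\}$. The Learned Kleinberg algorithm fixes $\hat S\in\arg\max_{S\subseteq N,|S|\le k}\hat v(S)$, hires the candidates of $\hat S$ as they arrive until the first candidate of $M$ arrives (at time $t_M$), then hires that candidate and runs Kleinberg's multiple-choice secretary algorithm with the remaining capacity $k'=k-|S|-1$ on the later-arriving candidates. The probability is over the arrival times. *)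

theory Defs
  imports "HOL-Probability.Probability"
begin

definition mispredicted :: "nat set \<Rightarrow> (nat \<Rightarrow> real) \<Rightarrow> (nat \<Rightarrow> real) \<Rightarrow> real \<Rightarrow> nat set" where
  "mispredicted N v vhat \<theta> = {i \<in> N. \<bar>1 - vhat i / v i\<bar> > \<theta>}"

definition is_pred_opt :: "nat set \<Rightarrow> (nat \<Rightarrow> real) \<Rightarrow> nat \<Rightarrow> nat set \<Rightarrow> bool" where
  "is_pred_opt N vhat k Shat \<longleftrightarrow> Shat \<subseteq> N \<and> card Shat \<le> k \<and>
     (\<forall>S. S \<subseteq> N \<longrightarrow> card S \<le> k \<longrightarrow> sum vhat S \<le> sum vhat Shat)"

definition first_arrival :: "nat set \<Rightarrow> (nat \<Rightarrow> real) \<Rightarrow> real" where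
  "first_arrival M t = Min (t ` M)"

definition hired_before :: "nat set \<Rightarrow> nat set \<Rightarrow> (nat \<Rightarrow> real) \<Rightarrow> nat set" where
  "hired_before Shat M t = {i \<in> Shat. t i < first_arrival M t}"

(* k' = k - |S| - 1, as a real number (may be negative) *)
definition remaining_capacity :: "nat \<Rightarrow> nat set \<Rightarrow> nat set \<Rightarrow> (nat \<Rightarrow> real) \<Rightarrow> real" where
  "remaining_capacity k Shat M t = real k - real (card (hired_before Shat M t)) - 1"

definition arrival_space :: "nat set \<Rightarrow> (nat \<Rightarrow> real) measure" where
  "arrival_space N = PiM N (\<lambda>_. uniform_measure lborel {0..1})"

end

theory Submission imports Defs begin

lemma comp_meas: "i \<in> N \<Longrightarrow> (\<lambda>t. t i) \<in> borel_measurable (arrival_space N)"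
proof -
  assume "i \<in> N"
  then have "(\<lambda>t. t i) \<in> measurable (arrival_space N) (uniform_measure lborel {0..1})"
    unfolding arrival_space_def by (rule measurable_component_singleton)
  moreover have "sets (uniform_measure lborel {0..1::real}) = sets borel" by simp
  ultimately show ?thesis using measurable_cong_sets[OF refl] by metis
qed

lemma card_filter_sum: "finite F \<Longrightarrow> card {i\<in>F. Q i} = (\<Sum>i\<in>F. if Q i then 1 else 0::nat)"
proof -
  assume "finite F"
  have "{i\<in>F. Q i} = F \<inter> Collect Q" by blast
  then show ?thesis using \<open>finite F\<close> by (simp add: sum.If_cases)
qed

lemma card_filter_real: "finite F \<Longrightarrow> real (card {i\<in>F. Q i}) = (\<Sum>i\<in>F. if Q i then 1 else 0::real)"
proof -
  assume "finite F"
  have "{i\<in>F. Q i} = F \<inter> Collect Q" by blast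
  then show ?thesis using \<open>finite F\<close> by (simp add: sum.If_cases)
qed

lemma prob_arr: "prob_space (arrival_space N)"
  unfolding arrival_space_def
  apply (intro prob_space_PiM prob_space_uniform_measure) 
  apply simp_all
  done

lemma meas_cnt:
  assumes "finite F" "F \<subseteq> N" "a \<in> N"
  shows "{t \<in> space (arrival_space N). real (card {i\<in>F. t a \<le> t i}) < R} \<in> sets (arrival_space N)"
proof -
  have [measurable]: "(\<lambda>t. t i) \<in> borel_measurable (arrival_space N)" if "i \<in> N" for i
    using comp_meas that by blast
  have m: "(\<lambda>t. \<Sum>i\<in>F. if t a \<le> t i then 1 else 0::real) \<in> borel_measurable (arrival_space N)"
  proof (rule borel_measurable_sum)
    fix i assume "i \<in> F"
    then have "i \<in> N" using assms by auto
    then show "(\<lambda>t. if t a \<le> t i then 1 else 0::real) \<in> borel_measurable (arrival_space N)"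
      using assms by measurable
  qed
  show ?thesis
    unfolding card_filter_real[OF assms(1)] using m by measurable
qed

lemma meas_rc:
  assumes "finite Sh" "Sh \<subseteq> N" "finite M" "M \<subseteq> N" 
  shows "{t \<in> space (arrival_space N). remaining_capacity k Sh M t < c} \<in> sets (arrival_space N)"
proof -
  have [measurable]: "(\<lambda>t. t i) \<in> borel_measurable (arrival_space N)" if "i \<in> N" for i
    using comp_meas that by blast
  have mm: "(\<lambda>t. Min ((\<lambda>i. t i) ` M)) \<in> borel_measurable (arrival_space N)"
    using assms by (intro borel_measurable_Min) auto
  have m: "(\<lambda>t. \<Sum>i\<in>Sh. if t i < Min ((\<lambda>i. t i) ` M) then 1 else 0::real) \<in> borel_measurable (arrival_space N)"
  proof (rule borel_measurable_sum)
    fix i assume "i \<in> Sh"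
    then have "i \<in> N" using assms by auto
    then show "(\<lambda>t. if t i < Min ((\<lambda>i. t i) ` M) then 1 else 0::real) \<in> borel_measurable (arrival_space N)"
      using assms mm by measurable
  qed
  show ?thesis
    unfolding remaining_capacity_def hired_before_def first_arrival_def card_filter_real[OF assms(1)]
    using m by measurable
qed

lemma sym_prob:
  assumes "finite A" "A \<subseteq> N" "a \<in> A" "j \<in> A"
  shows "measure (arrival_space N) {t \<in> space (arrival_space N). real (card {i\<in>A-{a}. t a \<le> t i}) < R}
       = measure (arrival_space N) {t \<in> space (arrival_space N). real (card {i\<in>A-{j}. t j \<le> t i}) < R}"
proof -
  define P where "P = arrival_space N"
  define E where "E b = {t \<in> space P. real (card {i\<in>A-{b}. t b \<le> t i}) < R}" for b
  define \<sigma> where "\<sigma> x = (if x = a then j else if x = j then a else x)" for x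
  define \<phi> where "\<phi> t = (\<lambda>x\<in>N. t (\<sigma> x))" for t :: "nat \<Rightarrow> real"
  have aN: "a \<in> N" and jN: "j \<in> N" using assms by auto
  have sN: "\<sigma> \<in> N \<rightarrow> N" using aN jN by (auto simp: \<sigma>_def)
  have sinj: "inj_on \<sigma> N" by (auto simp: \<sigma>_def inj_on_def)
  have U: "prob_space (uniform_measure lborel {0..1::real})"
    by (intro prob_space_uniform_measure) simp_all
  have D: "distr P P \<phi> = P"
    using distr_PiM_reindex[of N "\<lambda>_. uniform_measure lborel {0..1::real}" \<sigma> N, OF U sinj sN]
    unfolding P_def arrival_space_def \<phi>_def
    by simp
  have phim: "\<phi> \<in> P \<rightarrow>\<^sub>M P"
    unfolding P_def arrival_space_def \<phi>_def
    by (rule measurable_restrict, rule measurable_component_singleton) (use sN in auto)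
  have Ejm: "E j \<in> sets P"
  proof -
    have f1: "finite (A - {j})" using assms by simp
    have f2: "A - {j} \<subseteq> N" using assms by blast
    show ?thesis unfolding E_def P_def by (rule meas_cnt[OF f1 f2 jN])
  qed
  have pre: "\<phi> -` E j \<inter> space P = E a"
  proof (rule set_eqI)
    fix t
    show "t \<in> \<phi> -` E j \<inter> space P \<longleftrightarrow> t \<in> E a"
    proof (cases "t \<in> space P")
      case False then show ?thesis by (auto simp: E_def)
    next
      case True
      have sp: "\<phi> t \<in> space P" using phim True by (simp add: measurable_space)
      have e1: "{i\<in>A-{j}. \<phi> t j \<le> \<phi> t i} = {i\<in>A-{j}. t a \<le> t (\<sigma> i)}"
        using assms by (auto simp: \<phi>_def \<sigma>_def)
      have e2: "card {i\<in>A-{j}. t a \<le> t (\<sigma> i)} = card (\<sigma> ` {i\<in>A-{j}. t a \<le> t (\<sigma> i)})"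
        by (rule card_image[symmetric]) (auto simp: \<sigma>_def inj_on_def)
      have e3: "\<sigma> ` {i\<in>A-{j}. t a \<le> t (\<sigma> i)} = {i\<in>A-{a}. t a \<le> t i}"
      proof (rule set_eqI, rule iffI)
        fix x assume "x \<in> \<sigma> ` {i\<in>A-{j}. t a \<le> t (\<sigma> i)}"
        then show "x \<in> {i\<in>A-{a}. t a \<le> t i}" using assms by (auto simp: \<sigma>_def split: if_splits)
      next
        fix x assume x: "x \<in> {i\<in>A-{a}. t a \<le> t i}"
        have "\<sigma> (\<sigma> x) = x" by (auto simp: \<sigma>_def)
        moreover have "\<sigma> x \<in> {i\<in>A-{j}. t a \<le> t (\<sigma> i)}" using x assms by (auto simp: \<sigma>_def)
        ultimately show "x \<in> \<sigma> ` {i\<in>A-{j}. t a \<le> t (\<sigma> i)}" by (metis image_eqI)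
      qed
      have "card {i\<in>A-{j}. \<phi> t j \<le> \<phi> t i} = card {i\<in>A-{a}. t a \<le> t i}"
        using e1 e2 e3 by simp
      then show ?thesis using True sp by (auto simp: E_def)
    qed
  qed
  have "measure P (E j) = measure (distr P P \<phi>) (E j)" using D by simp
  also have "\<dots> = measure P (\<phi> -` E j \<inter> space P)" by (rule measure_distr[OF phim Ejm])
  also have "\<dots> = measure P (E a)" using pre by simp
  finally show ?thesis unfolding E_def P_def by simp
qed

lemma card_Q:
  fixes t :: "nat \<Rightarrow> real"
  assumes "finite A" "R > 0"
  shows "real (card {a\<in>A. real (card {i\<in>A-{a}. t a \<le> t i}) < R}) \<le> R + 1"
proof (cases "{a\<in>A. real (card {i\<in>A-{a}. t a \<le> t i}) < R} = {}")
  case True then show ?thesis using assms by (simp only: card.empty of_nat_0)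
next
  case False
  define Q where "Q = {a\<in>A. real (card {i\<in>A-{a}. t a \<le> t i}) < R}"
  have fQ: "finite Q" using assms by (simp add: Q_def)
  have "Min (t ` Q) \<in> t ` Q" using fQ False Q_def by (intro Min_in) auto
  then obtain a0 where a0: "a0 \<in> Q" "t a0 = Min (t ` Q)" by auto
  have le: "\<And>b. b \<in> Q \<Longrightarrow> t a0 \<le> t b" using a0 fQ by simp
  have sub: "Q - {a0} \<subseteq> {i\<in>A-{a0}. t a0 \<le> t i}" using le by (auto simp: Q_def)
  have "card (Q - {a0}) \<le> card {i\<in>A-{a0}. t a0 \<le> t i}"
    using assms(1) by (intro card_mono[OF _ sub]) auto
  moreover have "card Q = card (Q - {a0}) + 1" using a0(1) fQ
    by (metis card_Suc_Diff1 Suc_eq_plus1)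
  moreover have "real (card {i\<in>A-{a0}. t a0 \<le> t i}) < R" using a0(1) by (simp add: Q_def)
  ultimately show ?thesis unfolding Q_def[symmetric] by linarith
qed

theorem lemma3:
  fixes n k :: nat and v vhat :: "nat \<Rightarrow> real" and \<theta> :: real and Shat :: "nat set"
  assumes "k \<ge> 1"
    and "\<And>i. i \<in> {1..n} \<Longrightarrow> v i > 0"
    and "\<And>i. i \<in> {1..n} \<Longrightarrow> vhat i \<ge> 0"
    and "\<theta> \<ge> 0"
    and "is_pred_opt {1..n} vhat k Shat"
    and "1 \<le> card (mispredicted {1..n} v vhat \<theta>)"
    and "real (card (mispredicted {1..n} v vhat \<theta>)) \<le> sqrt k * ln k"
  shows "measure (arrival_space {1..n})
           {t \<in> space (arrival_space {1..n}).
              remaining_capacity k Shat (mispredicted {1..n} v vhat \<theta>) t \<ge> sqrt k * ln k}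
         \<ge> 1 - 3 * ln k / sqrt k"
proof -
  define Mi where "Mi = mispredicted {1..n} v vhat \<theta>"
  define P where "P = arrival_space {1..n}"
  define c where "c = sqrt k * ln k"
  interpret P: prob_space P unfolding P_def by (rule prob_arr)
  have Mi_sub: "Mi \<subseteq> {1..n}" by (auto simp: Mi_def mispredicted_def)
  have finMi: "finite Mi" using Mi_sub by (rule finite_subset) simp
  have cM: "1 \<le> card Mi" using assms(6) by (simp add: Mi_def)
  have cMc: "real (card Mi) \<le> c" using assms(7) by (simp add: Mi_def c_def)
  have "1 \<le> real (card Mi)" using cM by simp
  then have c1: "1 \<le> c" using cMc by linarith
  have "Mi \<noteq> {}" using cM by auto
  then obtain j where j: "j \<in> Mi" by blast
  have Sh: "Shat \<subseteq> {1..n}" "card Shat \<le> k" using assms(5) by (auto simp: is_pred_opt_def)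
  have finSh: "finite Shat" using Sh(1) by (rule finite_subset) simp
  define T where "T = Shat - Mi"
  define K where "K = card T"
  have finT: "finite T" using finSh by (simp add: T_def)
  have "card T \<le> card Shat" using finSh by (intro card_mono) (auto simp: T_def)
  then have KK: "K \<le> k" using Sh(2) by (simp add: K_def)
  have jT: "j \<notin> T" using j by (simp add: T_def)
  define A where "A = insert j T"
  have finA: "finite A" using finT A_def by simp
  have A_sub: "A \<subseteq> {1..n}" using Sh(1) j Mi_sub by (auto simp: A_def T_def)
  have cardA: "card A = K + 1" using finT jT by (simp add: A_def K_def)
  have AjT: "A - {j} = T" using jT by (auto simp: A_def)
  have jA: "j \<in> A" by (simp add: A_def)
  define R where "R = real K - real k + c + 1"
  define E where "E a = {t \<in> space P. real (card {i\<in>A-{a}. t a \<le> t i}) < R}" for a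
  define bad where "bad = {t \<in> space P. remaining_capacity k Shat Mi t < c}"
  have bad_meas: "bad \<in> sets P" unfolding bad_def P_def by (rule meas_rc[OF finSh Sh(1) finMi Mi_sub])
  have E_meas: "E a \<in> sets P" if "a \<in> A" for a
  proof -
    have f1: "finite (A - {a})" using finA by simp
    have f2: "A - {a} \<subseteq> {1..n}" using A_sub by blast
    have aN: "a \<in> {1..n}" using A_sub that by blast
    show ?thesis unfolding E_def P_def by (rule meas_cnt[OF f1 f2 aN])
  qed
  have E_sym: "P.prob (E a) = P.prob (E j)" if "a \<in> A" for a
    unfolding E_def P_def by (rule sym_prob[OF finA A_sub that jA])
  have bad_sub: "bad \<subseteq> E j"
  proof
    fix t assume tb: "t \<in> bad"
    define S where "S = hired_before Shat Mi t"
    have rc: "real k - real (card S) - 1 < c" using tb by (simp add: bad_def remaining_capacity_def S_def)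
    have minle: "Min (t ` Mi) \<le> t j" using finMi j by simp
    have S_sub: "S \<subseteq> {i\<in>T. t i < t j}"
    proof
      fix i assume "i \<in> S"
      then have i: "i \<in> Shat" "t i < Min (t ` Mi)" by (auto simp: S_def hired_before_def first_arrival_def)
      have "i \<notin> Mi"
      proof
        assume "i \<in> Mi"
        then have "Min (t ` Mi) \<le> t i" using finMi by simp
        with i show False by simp
      qed
      then show "i \<in> {i\<in>T. t i < t j}" using i minle by (simp add: T_def)
    qed
    have "card S \<le> card {i\<in>T. t i < t j}" using finT S_sub by (intro card_mono) auto
    then have h1: "real (card S) \<le> real (card {i\<in>T. t i < t j})" by simp
    have "card {i\<in>T. t j \<le> t i} + card {i\<in>T. t i < t j} = K"
    proof -
      have u: "{i\<in>T. t j \<le> t i} \<union> {i\<in>T. t i < t j} = T" by auto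
      have d: "{i\<in>T. t j \<le> t i} \<inter> {i\<in>T. t i < t j} = {}" by auto
      show ?thesis using card_Un_disjoint[of "{i\<in>T. t j \<le> t i}" "{i\<in>T. t i < t j}"] finT u d
        by (simp add: K_def)
    qed
    then have h2: "real (card {i\<in>T. t j \<le> t i}) + real (card {i\<in>T. t i < t j}) = real K"
      by (metis of_nat_add)
    have "real (card {i\<in>A-{j}. t j \<le> t i}) < R" using rc h1 h2 AjT unfolding R_def by simp
    then show "t \<in> E j" using tb by (simp add: E_def bad_def)
  qed
  have bad_le: "P.prob bad \<le> (R+1)/(K+1)" if Rpos: "R > 0"
  proof -
    have int: "integrable P (indicator (E a) :: _ \<Rightarrow> real)" if "a \<in> A" for a
      using E_meas[OF that] P.emeasure_finite[of "E a"]
      by (intro integrable_real_indicator) (auto simp: less_top[symmetric])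
    have Esp: "E a \<subseteq> space P" for a by (auto simp: E_def)
    have isum: "integral\<^sup>L P (\<lambda>t. \<Sum>a\<in>A. indicator (E a) t) = (\<Sum>a\<in>A. integral\<^sup>L P (indicator (E a)) :: real)"
      using Bochner_Integration.integral_sum[where I=A and M=P and f="\<lambda>a. indicator (E a)", OF int] by simp
    have "(\<Sum>a\<in>A. P.prob (E a)) = integral\<^sup>L P (\<lambda>t. \<Sum>a\<in>A. indicator (E a) t)"
      unfolding isum using Esp by (simp add: Int_absorb2)
    also have "\<dots> \<le> integral\<^sup>L P (\<lambda>_. R + 1)"
    proof (rule integral_mono)
      show "integrable P (\<lambda>t. \<Sum>a\<in>A. indicator (E a) t :: real)" using int by auto
      show "integrable P (\<lambda>_. R + 1)" by simp
      fix t assume "t \<in> space P"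
      have "(\<Sum>a\<in>A. indicator (E a) t :: real) = (\<Sum>a\<in>A. if real (card {i\<in>A-{a}. t a \<le> t i}) < R then 1 else 0)"
        using \<open>t \<in> space P\<close> by (intro sum.cong) (auto simp: E_def indicator_def)
      also have "\<dots> = real (card {a\<in>A. real (card {i\<in>A-{a}. t a \<le> t i}) < R})"
        using card_filter_real[OF finA] by simp
      also have "\<dots> \<le> R + 1" by (rule card_Q[OF finA Rpos])
      finally show "(\<Sum>a\<in>A. indicator (E a) t :: real) \<le> R + 1" .
    qed
    also have "\<dots> = R + 1" by (simp add: P.prob_space)
    finally have s: "(\<Sum>a\<in>A. P.prob (E a)) \<le> R + 1" .
    have "(\<Sum>a\<in>A. P.prob (E a)) = (\<Sum>a\<in>A. P.prob (E j))" using E_sym by (rule sum.cong[OF refl])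
    also have "\<dots> = (real K + 1) * P.prob (E j)" using cardA by simp
    finally have "(real K + 1) * P.prob (E j) \<le> R + 1" using s by simp
    then have "P.prob (E j) \<le> (R+1)/(K+1)" by (simp add: field_simps)
    moreover have "P.prob bad \<le> P.prob (E j)"
      using bad_sub E_meas[OF jA] by (intro P.finite_measure_mono)
    ultimately show ?thesis by simp
  qed
  have k2: "k \<ge> 2"
  proof (rule ccontr)
    assume "\<not> k \<ge> 2"
    then have "k = 1" using assms(1) by simp
    then have "c = 0" by (simp add: c_def)
    then show False using c1 by simp
  qed
  have goal: "P.prob bad \<le> 3 * c / k"
  proof (cases "real k - c - 1 < 0")
    case True
    have "real k \<le> 3 * c" using True k2 by linarith
    then have "1 \<le> 3 * c / k" using k2 by (simp add: field_simps)
    then show ?thesis using P.prob_le_1[of bad] by linarith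
  next
    case False
    show ?thesis
    proof (cases "R > 0")
      case False
      have "E j = {}" using False by (auto simp: E_def)
      then have "P.prob bad = 0" using bad_sub by simp
      moreover have "0 \<le> 3 * c / k" using c1 by simp
      ultimately show ?thesis by simp
    next
      case True
      have kc: "0 \<le> real k - c - 1" using False by linarith
      have kK: "0 \<le> real k - real K" using KK by simp
      have id: "(c+2)*(real K+1) - (R+1)*(real k+1) = (real k-c-1)*(real k-real K)" by (simp add: R_def algebra_simps)
      have "0 \<le> (real k-c-1)*(real k-real K)" using kc kK by (rule mult_nonneg_nonneg)
      then have pr: "(R+1)*(real k+1) \<le> (c+2)*(real K+1)" using id by linarith
      have f1: "(R+1)/(K+1) \<le> (c+2)/(k+1)" using pr by (simp add: divide_simps add.commute)
      have "1 * real k \<le> c * k" using c1 by (intro mult_right_mono) auto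
      then have "(c+2)*k \<le> 3*c*(k+1)" using c1 by (simp add: algebra_simps)
      then have f2: "(c+2)/(k+1) \<le> 3*c/k" using k2 by (simp add: divide_simps)
      show ?thesis using bad_le[OF True] f1 f2 by linarith
    qed
  qed
  have "space P - bad = {t \<in> space P. c \<le> remaining_capacity k Shat Mi t}" by (auto simp: bad_def)
  moreover have "P.prob (space P - bad) = 1 - P.prob bad" using bad_meas by (rule P.prob_compl)
  moreover have "3 * ln k / sqrt k = 3 * c / k"
  proof -
    have "sqrt (real k) > 0" using k2 by simp
    moreover have "real k = sqrt k * sqrt k" by simp
    ultimately show ?thesis unfolding c_def by (simp add: field_simps)
  qed
  ultimately show ?thesis using goal unfolding P_def Mi_def c_def by simp
qed

end
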